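(* Let $f=z^4+f_2z^2+f_3z+f_4$ with $f_j\in\mathbb{R}[x,y]$ homogeneous of degree $j$, and let $f=p_1^2+p_2^2+p_3^2$ with quadratic forms $p_i\in\mathbb{R}[x,y,z]$. Write $p_i=u_iz^2+v_iz+w_i$ with $u_i\in\mathbb{R}$, $v_i,w_i\in\mathbb{R}[x,y]$ homogeneous of degrees $1,2$. Then $u=(u_1,u_2,u_3)^t$ is a unit vector; choose $S\in O_3(\mathbb{R})$ with $Su=(1,0,0)^t$, let $(v'_i)=Sv$, $(w'_i)=Sw$, and put $\xi=2w'_1$, $\eta=2(v'_2w'_3-v'_3w'_2)$. Then $\eta^2+f_3^2=(f_2-\xi)(4f_4-\xi^2)$ and both $f_2-\xi$ and $4f_4-\xi^2$ are psd. Moreover $\xi$ does not depend on the choice of $S$, and depends only on the orthogonal equivalence class of the representation $f=\sum_i p_i^2$.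
   Context: psd means taking only nonnegative values on real points. Two representations $f=\sum_{i=1}^3p_i^2=\sum_{i=1}^3p_i'^2$ with quadratic forms $p_i,p_i'$ are (orthogonally) equivalent if there is $S=(s_{ij})\in O_3(\mathbb{R})$ with $p'_j=\sum_i s_{ij}p_i$ for $j=1,2,3$. *)

theory Defs
  imports "HOL-Analysis.Analysis"
begin

definition bin_form :: "nat \<Rightarrow> (real \<Rightarrow> real \<Rightarrow> real) \<Rightarrow> bool" where
  "bin_form d g \<longleftrightarrow> (\<exists>c :: nat \<Rightarrow> real. \<forall>x y. g x y = (\<Sum>k\<le>d. c k * x ^ k * y ^ (d - k)))"

definition tern_quad_form :: "(real \<Rightarrow> real \<Rightarrow> real \<Rightarrow> real) \<Rightarrow> bool" where
  "tern_quad_form q \<longleftrightarrow> (\<exists>c :: nat \<Rightarrow> nat \<Rightarrow> real. \<forall>x y z.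
      q x y z = (\<Sum>i\<le>2. \<Sum>j\<le>2 - i. c i j * x ^ i * y ^ j * z ^ (2 - i - j)))"

definition psd2 :: "(real \<Rightarrow> real \<Rightarrow> real) \<Rightarrow> bool" where
  "psd2 g \<longleftrightarrow> (\<forall>x y. g x y \<ge> 0)"

definition rep_decomp :: "(real \<Rightarrow> real \<Rightarrow> real \<Rightarrow> real^3) \<Rightarrow> real^3 \<Rightarrow>
    (real \<Rightarrow> real \<Rightarrow> real^3) \<Rightarrow> (real \<Rightarrow> real \<Rightarrow> real^3) \<Rightarrow> bool" where
  "rep_decomp p u v w \<longleftrightarrow>
     (\<forall>i. tern_quad_form (\<lambda>x y z. p x y z $ i)) \<and>
     (\<forall>i. bin_form 1 (\<lambda>x y. v x y $ i)) \<and>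
     (\<forall>i. bin_form 2 (\<lambda>x y. w x y $ i)) \<and>
     (\<forall>x y z i. p x y z $ i = u $ i * z ^ 2 + v x y $ i * z + w x y $ i)"

definition xi_of :: "real^3^3 \<Rightarrow> (real \<Rightarrow> real \<Rightarrow> real^3) \<Rightarrow> real \<Rightarrow> real \<Rightarrow> real" where
  "xi_of S w x y = 2 * (S *v w x y) $ 1"

definition eta_of :: "real^3^3 \<Rightarrow> (real \<Rightarrow> real \<Rightarrow> real^3) \<Rightarrow> (real \<Rightarrow> real \<Rightarrow> real^3)
    \<Rightarrow> real \<Rightarrow> real \<Rightarrow> real" where
  "eta_of S v w x y = 2 * ((S *v v x y) $ 2 * (S *v w x y) $ 3 - (S *v v x y) $ 3 * (S *v w x y) $ 2)"

end

theory Submission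
  imports Defs
begin

lemma orth_inner: "orthogonal_matrix (S::real^'n^'n) \<Longrightarrow> (S *v x) \<bullet> (S *v y) = x \<bullet> y"
  by (metis dot_lmul_matrix matrix_vector_mul_assoc matrix_vector_mul_lid
    orthogonal_matrix transpose_matrix_vector)

lemma coeff5: fixes A B C D E :: real
  assumes "\<forall>z. A*z^4 + B*z^3 + C*z^2 + D*z + E = 0"
  shows "A=0 \<and> B=0 \<and> C=0 \<and> D=0 \<and> E=0"
proof -
  have "A*0^4 + B*0^3 + C*0^2 + D*0 + E = 0" "A*1^4 + B*1^3 + C*1^2 + D*1 + E = 0"
   "A*(-1)^4 + B*(-1)^3 + C*(-1)^2 + D*(-1) + E = 0"
   "A*2^4 + B*2^3 + C*2^2 + D*2 + E = 0" "A*(-2)^4 + B*(-2)^3 + C*(-2)^2 + D*(-2) + E = 0"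
    using assms by blast+
  then show ?thesis by simp
qed

lemma inner3: "x \<bullet> (y::real^3) = x$1*y$1+x$2*y$2+x$3*y$3" by (simp add: inner_vec_def sum_3)

lemma e1_inner: "(vector [1,0,0] :: real^3) \<bullet> y = y$1" by (simp add: inner3)

lemma coeffs:
  fixes f2 f3 f4 :: "real \<Rightarrow> real \<Rightarrow> real"
    and p :: "real \<Rightarrow> real \<Rightarrow> real \<Rightarrow> real^3"
    and u :: "real^3" and v w :: "real \<Rightarrow> real \<Rightarrow> real^3"
  assumes dec: "rep_decomp p u v w"
    and rep: "\<forall>x y z. z ^ 4 + f2 x y * z ^ 2 + f3 x y * z + f4 x y = (\<Sum>i\<in>UNIV. (p x y z $ i) ^ 2)"
  shows "u \<bullet> u = 1 \<and> u \<bullet> v x y = 0 \<and> f2 x y = v x y \<bullet> v x y + 2 * (u \<bullet> w x y)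
     \<and> f3 x y = 2 * (v x y \<bullet> w x y) \<and> f4 x y = w x y \<bullet> w x y"
proof -
  define a where "a = v x y"
  define b where "b = w x y"
  have pe: "p x y z $ i = u $ i * z ^ 2 + a $ i * z + b $ i" for z i
    using dec unfolding rep_decomp_def a_def b_def by blast
  have "\<forall>z. (u$1*u$1+u$2*u$2+u$3*u$3 - 1)*z^4 + (2*(u$1*a$1+u$2*a$2+u$3*a$3))*z^3
     + ((a$1*a$1+a$2*a$2+a$3*a$3) + 2*(u$1*b$1+u$2*b$2+u$3*b$3) - f2 x y)*z^2
     + (2*(a$1*b$1+a$2*b$2+a$3*b$3) - f3 x y)*z + ((b$1*b$1+b$2*b$2+b$3*b$3) - f4 x y) = 0"
  proof
    fix z
    have h: "z ^ 4 + f2 x y * z ^ 2 + f3 x y * z + f4 x y =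
      (u $ 1 * z ^ 2 + a $ 1 * z + b $ 1)^2 + (u $ 2 * z ^ 2 + a $ 2 * z + b $ 2)^2
      + (u $ 3 * z ^ 2 + a $ 3 * z + b $ 3)^2"
      using rep[rule_format, of z x y] by (simp add: sum_3 pe)
    show "(u$1*u$1+u$2*u$2+u$3*u$3 - 1)*z^4 + (2*(u$1*a$1+u$2*a$2+u$3*a$3))*z^3
     + ((a$1*a$1+a$2*a$2+a$3*a$3) + 2*(u$1*b$1+u$2*b$2+u$3*b$3) - f2 x y)*z^2
     + (2*(a$1*b$1+a$2*b$2+a$3*b$3) - f3 x y)*z + ((b$1*b$1+b$2*b$2+b$3*b$3) - f4 x y) = 0"
      using h by algebra
  qed
  from coeff5[OF this] show ?thesis
    unfolding a_def[symmetric] b_def[symmetric] inner3 by simp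
qed

theorem lemma3p7:
  fixes f2 f3 f4 :: "real \<Rightarrow> real \<Rightarrow> real"
    and p :: "real \<Rightarrow> real \<Rightarrow> real \<Rightarrow> real^3"
    and u :: "real^3" and v w :: "real \<Rightarrow> real \<Rightarrow> real^3"
  assumes "bin_form 2 f2" and "bin_form 3 f3" and "bin_form 4 f4"
    and dec: "rep_decomp p u v w"
    and rep: "\<forall>x y z. z ^ 4 + f2 x y * z ^ 2 + f3 x y * z + f4 x y = (\<Sum>i\<in>UNIV. (p x y z $ i) ^ 2)"
  shows "norm u = 1
    \<and> (\<forall>S. orthogonal_matrix S \<and> S *v u = vector [1, 0, 0] \<longrightarrow>
          (\<forall>x y. (eta_of S v w x y) ^ 2 + (f3 x y) ^ 2
                 = (f2 x y - xi_of S w x y) * (4 * f4 x y - (xi_of S w x y) ^ 2))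
          \<and> psd2 (\<lambda>x y. f2 x y - xi_of S w x y)
          \<and> psd2 (\<lambda>x y. 4 * f4 x y - (xi_of S w x y) ^ 2))
    \<and> (\<forall>S S'. orthogonal_matrix S \<and> S *v u = vector [1, 0, 0] \<and>
          orthogonal_matrix S' \<and> S' *v u = vector [1, 0, 0] \<longrightarrow> xi_of S w = xi_of S' w)
    \<and> (\<forall>T p' u' v' w' S S'. orthogonal_matrix T \<and> (\<forall>x y z. p' x y z = transpose T *v p x y z)
          \<and> rep_decomp p' u' v' w'
          \<and> orthogonal_matrix S \<and> S *v u = vector [1, 0, 0]
          \<and> orthogonal_matrix S' \<and> S' *v u' = vector [1, 0, 0]
          \<longrightarrow> xi_of S w = xi_of S' w')"
proof -
  note C = coeffs[OF dec rep]
  have uu: "u \<bullet> u = 1" using C by blast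
  have n1: "norm u = 1" using uu by (metis norm_eq_1)
  have xi: "xi_of S w x y = 2 * (u \<bullet> w x y)" if S: "orthogonal_matrix S" "S *v u = vector [1, 0, 0]" for S x y
  proof -
    have "(S *v w x y) $ 1 = (S *v u) \<bullet> (S *v w x y)" using S(2) by (simp add: e1_inner)
    also have "\<dots> = u \<bullet> w x y" using orth_inner[OF S(1)] by simp
    finally show ?thesis by (simp add: xi_of_def)
  qed
  have part2: "(\<forall>x y. (eta_of S v w x y) ^ 2 + (f3 x y) ^ 2
                 = (f2 x y - xi_of S w x y) * (4 * f4 x y - (xi_of S w x y) ^ 2))
          \<and> psd2 (\<lambda>x y. f2 x y - xi_of S w x y)
          \<and> psd2 (\<lambda>x y. 4 * f4 x y - (xi_of S w x y) ^ 2)"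
    if S: "orthogonal_matrix S" "S *v u = vector [1, 0, 0]" for S
  proof -
    have key: "(S *v v x y) $ 1 = 0 \<and> f2 x y - xi_of S w x y = ((S *v v x y) $ 2)^2 + ((S *v v x y) $ 3)^2
      \<and> 4 * f4 x y - (xi_of S w x y) ^ 2 = 4 * (((S *v w x y) $ 2)^2 + ((S *v w x y) $ 3)^2)
      \<and> f3 x y = 2 * ((S *v v x y) $ 2 * (S *v w x y) $ 2 + (S *v v x y) $ 3 * (S *v w x y) $ 3)" for x y
    proof -
      note Cx = coeffs[OF dec rep, of x y]
      have o: "\<And>a b. (S *v a) \<bullet> (S *v b) = a \<bullet> b" using orth_inner[OF S(1)] by simp
      have a1: "(S *v v x y) $ 1 = 0"
        using o[of u "v x y"] Cx S(2) by (simp add: e1_inner)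
      have x1: "xi_of S w x y = 2 * (S *v w x y) $ 1" by (simp add: xi_of_def)
      have uw: "u \<bullet> w x y = (S *v w x y) $ 1" using xi[OF S, of x y] x1 by simp
      have "f2 x y = (S *v v x y) \<bullet> (S *v v x y) + 2 * ((S *v w x y) $ 1)" using Cx o uw by simp
      moreover have "f4 x y = (S *v w x y) \<bullet> (S *v w x y)" using Cx o by simp
      moreover have "f3 x y = 2 * ((S *v v x y) \<bullet> (S *v w x y))" using Cx o by simp
      ultimately show ?thesis using a1 x1
        by (simp add: inner3 power2_eq_square algebra_simps)
    qed
    show ?thesis
    proof (intro conjI allI)
      fix x y
      show "(eta_of S v w x y) ^ 2 + (f3 x y) ^ 2
                 = (f2 x y - xi_of S w x y) * (4 * f4 x y - (xi_of S w x y) ^ 2)"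
        using key[of x y] unfolding eta_of_def by (simp add: power2_eq_square algebra_simps)
    next
      show "psd2 (\<lambda>x y. f2 x y - xi_of S w x y)" unfolding psd2_def using key by simp
    next
      show "psd2 (\<lambda>x y. 4 * f4 x y - (xi_of S w x y) ^ 2)" unfolding psd2_def using key by simp
    qed
  qed
  have part3: "xi_of S w = xi_of S' w" if "orthogonal_matrix S \<and> S *v u = vector [1, 0, 0] \<and>
          orthogonal_matrix S' \<and> S' *v u = vector [1, 0, 0]" for S S'
    using that xi by (auto simp: fun_eq_iff)
  have part4: "xi_of S w = xi_of S' w'" if
     H: "orthogonal_matrix T \<and> (\<forall>x y z. p' x y z = transpose T *v p x y z)
          \<and> rep_decomp p' u' v' w'
          \<and> orthogonal_matrix S \<and> S *v u = vector [1, 0, 0]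
          \<and> orthogonal_matrix S' \<and> S' *v u' = vector [1, 0, 0]" for T p' u' v' w' S S'
  proof -
    have xi': "xi_of S' w' x y = 2 * (u' \<bullet> w' x y)" for x y
    proof -
      have "(S' *v w' x y) $ 1 = (S' *v u') \<bullet> (S' *v w' x y)" using H by (simp add: e1_inner)
      also have "\<dots> = u' \<bullet> w' x y" using orth_inner H by blast
      finally show ?thesis by (simp add: xi_of_def)
    qed
    have eqs: "u' = transpose T *v u \<and> w' x y = transpose T *v w x y" for x y
    proof -
      have pv: "p x y z = z^2 *\<^sub>R u + z *\<^sub>R v x y + w x y" for z
        using dec unfolding rep_decomp_def by (simp add: vec_eq_iff)
      have pv': "p' x y z = z^2 *\<^sub>R u' + z *\<^sub>R v' x y + w' x y" for z
      proof -
        have D': "rep_decomp p' u' v' w'" using H by blast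
        then show ?thesis unfolding rep_decomp_def by (simp add: vec_eq_iff)
      qed
      have "u' $ i = (transpose T *v u) $ i \<and> w' x y $ i = (transpose T *v w x y) $ i" for i
      proof -
        have "\<forall>z. 0*z^4 + 0*z^3 + (u' $ i - (transpose T *v u) $ i)*z^2
           + (v' x y $ i - (transpose T *v v x y) $ i)*z + (w' x y $ i - (transpose T *v w x y) $ i) = 0"
        proof
          fix z
          have "p' x y z = z^2 *\<^sub>R (transpose T *v u) + z *\<^sub>R (transpose T *v v x y) + transpose T *v w x y"
            using H pv by (simp add: matrix_vector_right_distrib matrix_vector_mult_scaleR del: transpose_matrix_vector)
          then have "(z^2 *\<^sub>R u' + z *\<^sub>R v' x y + w' x y) $ i = (z^2 *\<^sub>R (transpose T *v u) + z *\<^sub>R (transpose T *v v x y) + transpose T *v w x y) $ i"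
            using pv' by simp
          then show "0*z^4 + 0*z^3 + (u' $ i - (transpose T *v u) $ i)*z^2
           + (v' x y $ i - (transpose T *v v x y) $ i)*z + (w' x y $ i - (transpose T *v w x y) $ i) = 0"
            by (simp add: algebra_simps)
        qed
        from coeff5[OF this] show ?thesis by simp
      qed
      then show ?thesis by (simp add: vec_eq_iff)
    qed
    have oT: "orthogonal_matrix (transpose T)" using H by simp
    show ?thesis
    proof
      fix x
      show "xi_of S w x = xi_of S' w' x"
      proof
        fix y
        show "xi_of S w x y = xi_of S' w' x y"
          using xi[of S x y] H xi'[of x y] eqs[of x y] orth_inner[OF oT] by simp
      qed
    qed
  qed
  show ?thesis using n1 part2 part3 part4 by blast
qed

end
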